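(* Let $S=\gamma+\frac{L_{-4}'(1)}{L_{-4}(1)}$ (Sierpinski's constant, the Euler–Kronecker constant of $\mathbb{Q}(i)$). Then $S=2\gamma+\frac4\pi J_2$, where $J_2=\int_0^1\frac{\ln(-\ln x)}{1+x^2}dx$, and for every $0<b<\pi/2$ $$J_2=\frac12\sum_{k=1}^\infty\frac{E_{2k}b^{2k+1}}{(2k+1)!}\left[\ln b-\frac{1}{2k+1}\right]+\frac b2(\ln b-1)+\frac12\int_b^\infty\frac{\ln u}{\cosh u}du.$$ In particular, $$J_2=-\frac12\left[1+\sum_{k=1}^\infty\frac{E_{2k}}{(2k+1)!}\frac{1}{2k+1}\right]+\frac12\int_1^\infty\frac{\ln u}{\cosh u}du.$$
   Context: $\gamma$ is Euler's constant, $L_{-4}(s)=\sum_{n\ge0}(-1)^n(2n+1)^{-s}$, and $E_{2k}$ are the Euler numbers, defined by $\operatorname{sech}x=1+\sum_{k\ge1}\frac{E_{2k}}{(2k)!}x^{2k}$ for $|x|<\pi/2$. *)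

theory Defs
  imports "HOL-Analysis.Analysis"
begin

text \<open>Dirichlet L-function of the non-principal character mod 4, for real s
  (the defining series converges for s > 0).\<close>
definition L4 :: "real \<Rightarrow> real" where
  "L4 s = (\<Sum>n. (-1) ^ n / (real (2 * n + 1)) powr s)"

definition sierpinski_S :: real where
  "sierpinski_S = euler_mascheroni + deriv L4 1 / L4 1"

text \<open>Euler numbers: euler_num k is E_{2k}, defined by
  sech x = sum over k of E_{2k}/(2k)! x^(2k) for |x| < pi/2 (so E_0 = 1).\<close>
definition euler_num :: "nat \<Rightarrow> real" where
  "euler_num = (SOME E. \<forall>x::real. \<bar>x\<bar> < pi / 2 \<longrightarrow>
      (\<lambda>k. E k / fact (2 * k) * x ^ (2 * k)) sums (1 / cosh x))"

definition J2 :: real where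
  "J2 = (LBINT x:{0<..<1}. ln (- ln x) / (1 + x\<^sup>2))"

end

theory Submission
  imports Defs "HOL-Complex_Analysis.Complex_Analysis"
begin

lemma nonneg_has_integral_lborel:
  fixes f :: "real \<Rightarrow> real"
  assumes I: "(f has_integral I) S" and nn: "\<And>x. x \<in> S \<Longrightarrow> 0 \<le> f x"
    and m: "set_borel_measurable lborel S f"
  shows "set_integrable lborel S f" "(LBINT x:S. f x) = I"
proof -
  have "f absolutely_integrable_on S"
    using I nn by (intro nonnegative_absolutely_integrable_1) (auto simp: has_integral_integrable)
  hence "integrable lebesgue (\<lambda>x. indicator S x *\<^sub>R f x)" by (simp add: set_integrable_def)
  moreover have "(\<lambda>x. indicator S x *\<^sub>R f x) \<in> borel_measurable lborel"
    using m by (simp add: set_borel_measurable_def)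
  ultimately show si: "set_integrable lborel S f" unfolding set_integrable_def
    using integrable_completion by blast
  show "(LBINT x:S. f x) = I"
    using set_borel_integral_eq_integral(2)[OF si] I by (simp add: integral_unique)
qed

lemma Gamma_has_integral_Ioi:
  assumes "s > (0::real)"
  shows "((\<lambda>t. t powr (s - 1) * exp (-t)) has_integral Gamma s) {0<..}"
proof -
  have "((\<lambda>t. t powr (s - 1) / exp t) has_integral Gamma s) {0..}" by (rule Gamma_integral_real[OF assms])
  then have "((\<lambda>t. t powr (s - 1) * exp (-t)) has_integral Gamma s) {0..}"
    by (simp add: exp_minus field_simps)
  then show ?thesis
    by (subst has_integral_spike_set_eq[where T="{0..}"]) (auto intro: negligible_subset[of "{0}"])
qed

lemma Gamma_lborel:
  assumes "s > (0::real)"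
  shows "set_integrable lborel {0<..} (\<lambda>t. t powr (s - 1) * exp (-t))"
    "(LBINT t:{0<..}. t powr (s - 1) * exp (-t)) = Gamma s"
proof -
  have m: "set_borel_measurable lborel {0<..} (\<lambda>t. t powr (s - 1) * exp (-t))"
    unfolding set_borel_measurable_def by measurable
  show "set_integrable lborel {0<..} (\<lambda>t. t powr (s - 1) * exp (-t))"
    "(LBINT t:{0<..}. t powr (s - 1) * exp (-t)) = Gamma s"
    using nonneg_has_integral_lborel[OF Gamma_has_integral_Ioi[OF assms] _ m] by auto
qed

lemma Gamma_scaled_lborel:
  assumes s: "s > 0" and m: "m > (0::real)"
  shows "set_integrable lborel {0<..} (\<lambda>t. t powr (s - 1) * exp (-(m*t)))"
    "(LBINT t:{0<..}. t powr (s - 1) * exp (-(m*t))) = Gamma s / m powr s"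
proof -
  define g where "g = (\<lambda>x::real. indicator {0<..} x *\<^sub>R (x powr (s - 1) * exp (-x)))"
  define h where "h = (\<lambda>x::real. indicator {0<..} x *\<^sub>R (x powr (s - 1) * exp (-(m*x))))"
  have gi: "integrable lborel g" using Gamma_lborel(1)[OF s] by (simp add: set_integrable_def g_def)
  have gI: "integral\<^sup>L lborel g = Gamma s"
    using Gamma_lborel(2)[OF s] by (simp add: set_lebesgue_integral_def g_def)
  have eq: "g (0 + m*x) = m powr (s - 1) * h x" for x
    using m by (auto simp: g_def h_def indicator_def powr_mult zero_less_mult_iff)
  have "integrable lborel (\<lambda>x. g (0 + m*x))" using lborel_integrable_real_affine[OF gi, of m 0] m by simp
  hence "integrable lborel (\<lambda>x. m powr (s - 1) * h x)" unfolding eq .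
  hence hi: "integrable lborel h" using m by simp
  then show "set_integrable lborel {0<..} (\<lambda>t. t powr (s - 1) * exp (-(m*t)))"
    by (simp add: set_integrable_def h_def)
  have "Gamma s = \<bar>m\<bar> *\<^sub>R (\<integral>x. g (0 + m*x) \<partial>lborel)"
    using lborel_integral_real_affine[of m g 0] m gI by simp
  also have "\<dots> = m * m powr (s - 1) * integral\<^sup>L lborel h"
    using m unfolding eq by simp
  also have "m * m powr (s - 1) = m powr s"
  proof -
    have "m powr s = m powr (1 + (s - 1))" by simp
    also have "\<dots> = m powr 1 * m powr (s - 1)" by (rule powr_add)
    also have "m powr 1 = m" using m by simp
    finally show ?thesis by simp
  qed
  finally have "integral\<^sup>L lborel h = Gamma s / m powr s" using m by (simp add: field_simps)
  then show "(LBINT t:{0<..}. t powr (s - 1) * exp (-(m*t))) = Gamma s / m powr s"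
    by (simp add: set_lebesgue_integral_def h_def)
qed


definition wfun :: "real \<Rightarrow> real" where
  "wfun t = exp (-t) / (1 + exp (-(2*t)))"

definition Ffun :: "real \<Rightarrow> real" where
  "Ffun s = (LBINT t:{0<..}. t powr (s - 1) * wfun t)"

lemma wfun_pos: "wfun t > 0" unfolding wfun_def by (intro divide_pos_pos) (auto intro: add_pos_pos)

lemma wfun_le: "wfun t \<le> exp (-t)"
  unfolding wfun_def by (simp add: divide_le_eq add_pos_pos)

lemma partial_geo:
  fixes t :: real assumes t: "t > 0"
  shows "(\<Sum>n<N. (-1)^n * exp (-(real (2*n+1) * t))) = exp (-t) * (\<Sum>n<N. (- exp (-(2*t)))^n)"
proof -
  have "(-1)^n * exp (-(real (2*n+1) * t)) = exp (-t) * (- exp (-(2*t)))^n" for n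
  proof -
    have "exp (-(real (2*n+1) * t)) = exp (-t + real n * (-(2*t)))" by (simp add: algebra_simps)
    also have "\<dots> = exp (-t) * exp (real n * (-(2*t)))" by (rule exp_add)
    also have "exp (real n * (-(2*t))) = exp (-(2*t)) ^ n" by (rule exp_of_nat_mult)
    finally show ?thesis by (simp add: power_minus[of "exp (-(2*t))"])
  qed
  then show ?thesis by (simp add: sum_distrib_left)
qed

lemma partial_geo_lim:
  fixes t :: real assumes t: "t > 0"
  shows "(\<lambda>N. \<Sum>n<N. (-1)^n * exp (-(real (2*n+1) * t))) \<longlonglongrightarrow> wfun t"
proof -
  have q: "norm (- exp (-(2*t))) < 1" using t by simp
  have "(\<lambda>N. \<Sum>n<N. (- exp (-(2*t)))^n) \<longlonglongrightarrow> 1 / (1 - (- exp (-(2*t))))"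
    using geometric_sums[OF q] by (simp add: sums_def)
  then have "(\<lambda>N. exp (-t) * (\<Sum>n<N. (- exp (-(2*t)))^n)) \<longlonglongrightarrow> exp (-t) * (1 / (1 - (- exp (-(2*t)))))"
    by (intro tendsto_mult tendsto_const)
  then show ?thesis using t unfolding partial_geo[OF t] wfun_def by simp
qed

lemma partial_geo_bound:
  fixes t :: real assumes t: "t > 0"
  shows "\<bar>\<Sum>n<N. (-1)^n * exp (-(real (2*n+1) * t))\<bar> \<le> 2 * exp (-t)"
proof -
  define q where "q = - exp (-(2*t))"
  have q1: "q \<noteq> 1" "\<bar>q\<bar> \<le> 1" "1 - q \<ge> 1" unfolding q_def using t exp_gt_zero[of "-(2*t)"] by (auto simp del: exp_gt_zero)
  have "(\<Sum>n<N. q^n) = (1 - q^N) / (1 - q)" using q1 by (simp add: sum_gp_strict)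
  moreover have "\<bar>1 - q^N\<bar> \<le> 2"
  proof -
    have "\<bar>q^N\<bar> \<le> 1" using q1 by (simp add: power_abs power_le_one)
    then show ?thesis by linarith
  qed
  ultimately have "\<bar>\<Sum>n<N. q^n\<bar> \<le> 2" using q1
    by (simp add: abs_divide divide_le_eq)
  then have "exp (-t) * \<bar>\<Sum>n<N. q^n\<bar> \<le> exp (-t) * 2"
    by (intro mult_left_mono) auto
  moreover have "\<bar>\<Sum>n<N. (-1)^n * exp (-(real (2*n+1) * t))\<bar> = exp (-t) * \<bar>\<Sum>n<N. q^n\<bar>"
    unfolding partial_geo[OF t] q_def abs_mult by simp
  ultimately show ?thesis by linarith
qed


lemma Ffun_integrable:
  assumes s: "s > 0"
  shows "set_integrable lborel {0<..} (\<lambda>t. t powr (s - 1) * wfun t)"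
proof (rule set_integrable_bound[OF Gamma_lborel(1)[OF s]])
  show "set_borel_measurable lborel {0<..} (\<lambda>t. t powr (s - 1) * wfun t)"
    unfolding set_borel_measurable_def wfun_def by measurable
  show "AE x in lborel. x \<in> {0<..} \<longrightarrow> norm (x powr (s - 1) * wfun x) \<le> norm (x powr (s - 1) * exp (- x))"
    using wfun_le by (auto simp: abs_mult abs_of_pos[OF wfun_pos] intro!: AE_I2 mult_left_mono)
qed

lemma L4_Gamma:
  assumes s: "s > 0"
  shows "L4 s = Ffun s / Gamma s"
proof -
  define P where "P N t = (\<Sum>n<N. (-1)^n * exp (-(real (2*n+1) * t)))" for N and t :: real
  define S where "S N t = indicator {0<..} t *\<^sub>R (t powr (s - 1) * P N t)" for N and t :: real
  define f where "f t = indicator {0<..} t *\<^sub>R (t powr (s - 1) * wfun t)" for t :: real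
  define w where "w = (\<lambda>t::real. 2 * (indicator {0<..} t *\<^sub>R (t powr (s - 1) * exp (-t))))"
  have Gint: "\<And>n. integrable lborel (\<lambda>t. indicator {0<..} t *\<^sub>R (t powr (s - 1) * exp (-(real (2*n+1) * t))))"
    using Gamma_scaled_lborel(1)[OF s] by (simp add: set_integrable_def)
  have intS: "integral\<^sup>L lborel (S N) = (\<Sum>n<N. (-1)^n * (Gamma s / real (2*n+1) powr s))" for N
  proof -
    have "S N = (\<lambda>t. \<Sum>n<N. (-1)^n * (indicator {0<..} t *\<^sub>R (t powr (s - 1) * exp (-(real (2*n+1) * t)))))"
      by (rule ext) (simp add: S_def P_def sum_distrib_left algebra_simps)
    then have "integral\<^sup>L lborel (S N) = (\<Sum>n<N. (-1)^n * integral\<^sup>L lborel (\<lambda>t. indicator {0<..} t *\<^sub>R (t powr (s - 1) * exp (-(real (2*n+1) * t)))))"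
      using Gint by (simp add: integral_sum)
    also have "\<dots> = (\<Sum>n<N. (-1)^n * (Gamma s / real (2*n+1) powr s))"
    proof (rule sum.cong[OF refl])
      fix n
      have "real (2*n+1) > 0" by simp
      from Gamma_scaled_lborel(2)[OF s this] show "(-1)^n * integral\<^sup>L lborel (\<lambda>t. indicator {0<..} t *\<^sub>R (t powr (s - 1) * exp (-(real (2*n+1) * t)))) = (-1)^n * (Gamma s / real (2*n+1) powr s)"
        by (simp add: set_lebesgue_integral_def)
    qed
    finally show ?thesis .
  qed
  have lim: "(\<lambda>N. integral\<^sup>L lborel (S N)) \<longlonglongrightarrow> integral\<^sup>L lborel f"
  proof (rule integral_dominated_convergence[where w=w])
    show "f \<in> borel_measurable lborel" unfolding f_def wfun_def by measurable
    show "S N \<in> borel_measurable lborel" for N unfolding S_def P_def by measurable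
    show "integrable lborel w"
      unfolding w_def using Gamma_lborel(1)[OF s] unfolding set_integrable_def by (rule integrable_mult_right)
    show "AE x in lborel. (\<lambda>N. S N x) \<longlonglongrightarrow> f x"
    proof (rule AE_I2)
      fix x :: real
      show "(\<lambda>N. S N x) \<longlonglongrightarrow> f x"
      proof (cases "x > 0")
        case True
        have "(\<lambda>N. P N x) \<longlonglongrightarrow> wfun x" unfolding P_def by (rule partial_geo_lim[OF True])
        then have "(\<lambda>N. x powr (s - 1) * P N x) \<longlonglongrightarrow> x powr (s - 1) * wfun x" by (rule tendsto_mult_left)
        then show ?thesis using True by (simp add: S_def f_def)
      qed (simp add: S_def f_def)
    qed
    show "AE x in lborel. norm (S N x) \<le> w x" for N
    proof (rule AE_I2)
      fix x :: real
      show "norm (S N x) \<le> w x"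
      proof (cases "x > 0")
        case True
        have "\<bar>P N x\<bar> \<le> 2 * exp (-x)" unfolding P_def by (rule partial_geo_bound[OF True])
        then have "x powr (s - 1) * \<bar>P N x\<bar> \<le> x powr (s - 1) * (2 * exp (-x))"
          by (intro mult_left_mono) auto
        then show ?thesis using True by (simp add: S_def w_def abs_mult algebra_simps)
      qed (simp add: S_def w_def)
    qed
  qed
  have "f = (\<lambda>t. indicator {0<..} t *\<^sub>R (t powr (s - 1) * wfun t))" by (rule ext) (simp add: f_def)
  then have "integral\<^sup>L lborel f = Ffun s" by (simp add: Ffun_def set_lebesgue_integral_def)
  with lim intS have "(\<lambda>N. \<Sum>n<N. (-1)^n * (Gamma s / real (2*n+1) powr s)) \<longlonglongrightarrow> Ffun s" by simp
  then have "(\<lambda>N. (\<Sum>n<N. (-1)^n * (Gamma s / real (2*n+1) powr s)) / Gamma s) \<longlonglongrightarrow> Ffun s / Gamma s"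
    using Gamma_real_pos[OF s] by (intro tendsto_divide tendsto_const) auto
  moreover have "(\<Sum>n<N. (-1)^n * (Gamma s / real (2*n+1) powr s)) / Gamma s = (\<Sum>n<N. (-1)^n / real (2*n+1) powr s)" for N
    using Gamma_real_pos[OF s] by (simp add: sum_divide_distrib)
  ultimately have "(\<lambda>n. (-1)^n / real (2*n+1) powr s) sums (Ffun s / Gamma s)"
    by (simp add: sums_def)
  then show ?thesis unfolding L4_def by (simp add: sums_iff)
qed


lemma exp_minus_one_bound: "\<bar>exp (x::real) - 1\<bar> \<le> \<bar>x\<bar> * exp \<bar>x\<bar>"
proof (cases "x \<ge> 0")
  case True
  have "1 - x \<le> exp (-x)" using exp_ge_add_one_self[of "-x"] by simp
  then have "exp x * (1 - x) \<le> exp x * exp (-x)" by (intro mult_left_mono) auto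
  then have "exp x - 1 \<le> x * exp x" by (simp add: exp_minus field_simps)
  moreover have "exp x \<ge> 1" using True by simp
  ultimately show ?thesis using True by simp
next
  case False
  have "1 + x \<le> exp x" by (rule exp_ge_add_one_self)
  moreover have "exp x \<le> 1" using False by simp
  moreover have "(-x) * 1 \<le> (-x) * exp (-x)" using False by (intro mult_left_mono) auto
  moreover have "\<bar>exp x - 1\<bar> = 1 - exp x" "\<bar>x\<bar> * exp \<bar>x\<bar> = (-x) * exp (-x)"
    using False \<open>exp x \<le> 1\<close> by auto
  ultimately show ?thesis by linarith
qed

lemma powr_diff_quot_bound:
  fixes t h :: real
  assumes t: "t > 0" and h: "h \<noteq> 0" "\<bar>h\<bar> \<le> 1/2"
  shows "\<bar>(t powr h - 1) / h\<bar> \<le> 2 * t + 4 * t powr (-3/4)"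
proof -
  define a where "a = ln t"
  have "t powr h = exp (h * a)" using t by (simp add: powr_def a_def)
  then have "\<bar>t powr h - 1\<bar> \<le> \<bar>h * a\<bar> * exp \<bar>h * a\<bar>" using exp_minus_one_bound by simp
  also have "\<dots> \<le> \<bar>h\<bar> * (\<bar>a\<bar> * exp (\<bar>a\<bar> / 2))"
  proof -
    have "\<bar>h\<bar> * \<bar>a\<bar> \<le> (1/2) * \<bar>a\<bar>" using h by (intro mult_right_mono) auto
    then have "\<bar>h * a\<bar> \<le> \<bar>a\<bar> / 2" by (simp add: abs_mult)
    then have "exp \<bar>h * a\<bar> \<le> exp (\<bar>a\<bar> / 2)" by simp
    then have "\<bar>h * a\<bar> * exp \<bar>h * a\<bar> \<le> \<bar>h * a\<bar> * exp (\<bar>a\<bar> / 2)" by (rule mult_left_mono) auto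
    then show ?thesis by (simp add: abs_mult mult.assoc)
  qed
  finally have 1: "\<bar>(t powr h - 1) / h\<bar> \<le> \<bar>a\<bar> * exp (\<bar>a\<bar> / 2)"
    using h by (simp add: abs_divide divide_le_eq mult.commute)
  have 2: "\<bar>a\<bar> * exp (\<bar>a\<bar> / 2) \<le> 2 * t + 4 * t powr (-3/4)"
  proof (cases "t \<ge> 1")
    case True
    then have a0: "a \<ge> 0" by (simp add: a_def)
    have e: "exp (a / 2) = t powr (1/2)" using t by (simp add: powr_def a_def)
    have "a = 2 * ln (t powr (1/2))" using t by (simp add: a_def ln_powr)
    also have "\<dots> \<le> 2 * t powr (1/2)" using ln_le_minus_one[of "t powr (1/2)"] t by simp
    finally have "a * exp (a / 2) \<le> 2 * t powr (1/2) * t powr (1/2)"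
      using a0 e by (intro mult_mono) auto
    also have "\<dots> = 2 * t" using t by (simp flip: powr_add)
    finally show ?thesis using a0 by (simp add: add_increasing2)
  next
    case False
    then have a0: "a < 0" using t by (simp add: a_def)
    have e: "exp (- a / 2) = t powr (-1/2)" using t by (simp add: powr_def a_def)
    have "- a = 4 * ln (t powr (-1/4))" using t by (simp add: a_def ln_powr)
    also have "\<dots> \<le> 4 * t powr (-1/4)" using ln_le_minus_one[of "t powr (-1/4)"] t by simp
    finally have "(-a) * exp (- a / 2) \<le> 4 * t powr (-1/4) * t powr (-1/2)"
      using a0 e by (intro mult_mono) auto
    also have "\<dots> = 4 * t powr (-3/4)" using t by (simp flip: powr_add)
    finally show ?thesis using a0 t by simp
  qed
  from 1 2 show ?thesis by linarith
qed

lemma integral_dominated_convergence_at0: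
  fixes s :: "real \<Rightarrow> real \<Rightarrow> real" and f w :: "real \<Rightarrow> real"
  assumes f: "f \<in> borel_measurable lborel" and sm: "\<And>h. s h \<in> borel_measurable lborel"
    and w: "integrable lborel w"
    and lim: "AE x in lborel. ((\<lambda>h. s h x) \<longlongrightarrow> f x) (at 0)"
    and d: "d > 0" and bound: "\<And>h. h \<noteq> 0 \<Longrightarrow> \<bar>h\<bar> \<le> d \<Longrightarrow> AE x in lborel. norm (s h x) \<le> w x"
  shows "((\<lambda>h. integral\<^sup>L lborel (s h)) \<longlongrightarrow> integral\<^sup>L lborel f) (at 0)"
  unfolding tendsto_at_iff_sequentially
proof (intro allI impI)
  fix X :: "nat \<Rightarrow> real"
  assume X: "\<forall>i. X i \<in> UNIV - {0}" "X \<longlonglongrightarrow> 0"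
  from X(2) d have "eventually (\<lambda>i. \<bar>X i\<bar> < d) sequentially"
    by (auto dest: order_tendstoD simp: tendsto_iff dist_real_def)
  then obtain N where N: "\<And>i. i \<ge> N \<Longrightarrow> \<bar>X i\<bar> < d" by (auto simp: eventually_sequentially)
  have Xat: "filterlim X (at 0) sequentially"
    using X by (intro filterlim_atI) auto
  show "((\<lambda>h. integral\<^sup>L lborel (s h)) \<circ> X) \<longlonglongrightarrow> integral\<^sup>L lborel f"
    unfolding comp_def
  proof (rule LIMSEQ_offset[where k=N], rule integral_dominated_convergence[where w=w])
    show "AE x in lborel. norm (s (X (i + N)) x) \<le> w x" for i
      using N[of "i+N"] X(1) by (intro bound) auto
    show "AE x in lborel. (\<lambda>i. s (X (i + N)) x) \<longlonglongrightarrow> f x"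
      using lim
    proof eventually_elim
      fix x assume "((\<lambda>h. s h x) \<longlongrightarrow> f x) (at 0)"
      then have "(\<lambda>i. s (X i) x) \<longlonglongrightarrow> f x" by (rule filterlim_compose[OF _ Xat])
      then show "(\<lambda>i. s (X (i + N)) x) \<longlonglongrightarrow> f x" by (rule LIMSEQ_ignore_initial_segment)
    qed
  qed (use f sm w in auto)
qed


lemma Ffun_deriv: "(Ffun has_real_derivative (LBINT t:{0<..}. ln t * wfun t)) (at 1)"
proof -
  define f where "f = (\<lambda>t::real. indicator {0<..} t *\<^sub>R (ln t * wfun t))"
  define sh where "sh = (\<lambda>h t::real. indicator {0<..} t *\<^sub>R ((t powr h - 1) / h * wfun t))"
  define g2 where "g2 = (\<lambda>t::real. indicator {0<..} t *\<^sub>R (t powr (2 - 1) * exp (-t)))"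
  define g4 where "g4 = (\<lambda>t::real. indicator {0<..} t *\<^sub>R (t powr (1/4 - 1) * exp (-t)))"
  define B where "B = (\<lambda>t::real. 2 * g2 t + 4 * g4 t)"
  have "integrable lborel g2" using Gamma_lborel(1)[of 2] unfolding set_integrable_def g2_def by simp
  moreover have "integrable lborel g4" using Gamma_lborel(1)[of "1/4"] unfolding set_integrable_def g4_def by simp
  ultimately have Bi: "integrable lborel B" unfolding B_def
    by (auto intro!: Bochner_Integration.integrable_add)
  have lim: "((\<lambda>h. integral\<^sup>L lborel (sh h)) \<longlongrightarrow> integral\<^sup>L lborel f) (at 0)"
  proof (rule integral_dominated_convergence_at0[where w=B and d="1/2"])
    show "f \<in> borel_measurable lborel" unfolding f_def wfun_def by measurable
    show "sh h \<in> borel_measurable lborel" for h unfolding sh_def wfun_def by measurable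
    show "integrable lborel B" by (rule Bi)
    show "AE x in lborel. ((\<lambda>h. sh h x) \<longlongrightarrow> f x) (at 0)"
    proof (rule AE_I2)
      fix x :: real
      show "((\<lambda>h. sh h x) \<longlongrightarrow> f x) (at 0)"
      proof (cases "x > 0")
        case True
        have "((\<lambda>h. exp (h * ln x)) has_real_derivative exp (0 * ln x) * ln x) (at 0)"
          by (auto intro!: derivative_eq_intros)
        then have "((\<lambda>h. (exp ((0 + h) * ln x) - exp (0 * ln x)) / h) \<longlongrightarrow> ln x) (at 0)"
          unfolding DERIV_def by simp
        then have "((\<lambda>h. (x powr h - 1) / h) \<longlongrightarrow> ln x) (at 0)"
          using True by (simp add: powr_def)
        then have "((\<lambda>h. (x powr h - 1) / h * wfun x) \<longlongrightarrow> ln x * wfun x) (at 0)"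
          by (rule tendsto_mult_right)
        then show ?thesis using True by (simp add: sh_def f_def)
      qed (simp add: sh_def f_def)
    qed
    show "AE x in lborel. norm (sh h x) \<le> B x" if "h \<noteq> 0" "\<bar>h\<bar> \<le> 1/2" for h
    proof (rule AE_I2)
      fix x :: real
      show "norm (sh h x) \<le> B x"
      proof (cases "x > 0")
        case True
        have 1: "\<bar>(x powr h - 1) / h\<bar> \<le> 2 * x + 4 * x powr (-3/4)"
          by (rule powr_diff_quot_bound[OF True that])
        have "\<bar>(x powr h - 1) / h * wfun x\<bar> = \<bar>(x powr h - 1) / h\<bar> * wfun x"
          by (simp add: abs_mult abs_of_pos[OF wfun_pos])
        also have "\<dots> \<le> (2 * x + 4 * x powr (-3/4)) * exp (-x)"
          using 1 wfun_le[of x] wfun_pos[of x] True by (intro mult_mono) (auto intro!: add_nonneg_nonneg)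
        also have "\<dots> = B x" using True by (simp add: B_def g2_def g4_def algebra_simps)
        finally show ?thesis using True by (simp add: sh_def)
      next
        case False
        then show ?thesis by (simp add: sh_def B_def g2_def g4_def)
      qed
    qed
  qed simp
  have eqv: "(Ffun (1 + h) - Ffun 1) / h = integral\<^sup>L lborel (sh h)" if "h \<noteq> 0" "\<bar>h\<bar> < 1" for h
  proof -
    have i1: "integrable lborel (\<lambda>t. indicator {0<..} t *\<^sub>R (t powr (1 + h - 1) * wfun t))"
      using Ffun_integrable[of "1 + h"] that by (simp add: set_integrable_def)
    have i0: "integrable lborel (\<lambda>t. indicator {0<..} t *\<^sub>R (t powr (1 - 1) * wfun t))"
      using Ffun_integrable[of 1] by (simp add: set_integrable_def)
    have "(Ffun (1 + h) - Ffun 1) / h = (integral\<^sup>L lborel (\<lambda>t. indicator {0<..} t *\<^sub>R (t powr (1 + h - 1) * wfun t))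
        - integral\<^sup>L lborel (\<lambda>t. indicator {0<..} t *\<^sub>R (t powr (1 - 1) * wfun t))) / h"
      by (simp add: Ffun_def set_lebesgue_integral_def)
    also have "\<dots> = integral\<^sup>L lborel (\<lambda>t. (indicator {0<..} t *\<^sub>R (t powr (1 + h - 1) * wfun t)
        - indicator {0<..} t *\<^sub>R (t powr (1 - 1) * wfun t)) / h)"
      using i1 i0 by (simp add: integral_diff)
    also have "\<dots> = integral\<^sup>L lborel (sh h)"
      unfolding sh_def by (rule Bochner_Integration.integral_cong) (auto simp: indicator_def field_simps)
    finally show ?thesis .
  qed
  have ev: "eventually (\<lambda>h. integral\<^sup>L lborel (sh h) = (Ffun (1 + h) - Ffun 1) / h) (at 0)"
    unfolding eventually_at using eqv by (intro exI[of _ 1]) auto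
  have "((\<lambda>h. (Ffun (1 + h) - Ffun 1) / h) \<longlongrightarrow> integral\<^sup>L lborel f) (at 0)"
    using tendsto_cong[OF ev] lim by simp
  moreover have "integral\<^sup>L lborel f = (LBINT t:{0<..}. ln t * wfun t)"
    by (simp add: f_def set_lebesgue_integral_def)
  ultimately show ?thesis unfolding DERIV_def by simp
qed


lemma L4_1: "L4 1 = pi / 4"
proof -
  have "(\<lambda>n. (-1)^n / real (2*n+1) powr 1) = (\<lambda>k. (-1)^k * 1 / real (k*2+1))"
    by (rule ext) (simp add: mult.commute)
  then show ?thesis unfolding L4_def using pi_series by simp
qed

lemma sierpinski_S_eq:
  "sierpinski_S = 2 * euler_mascheroni + 4 / pi * (LBINT t:{0<..}. ln t * wfun t)"
proof -
  define Jd where "Jd = (LBINT t:{0<..}. ln t * wfun t)"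
  have F1: "Ffun 1 = pi / 4" using L4_Gamma[of 1] L4_1 by simp
  have nz: "(1::real) \<notin> \<int>\<^sub>\<le>\<^sub>0" by simp
  have "((\<lambda>s. Ffun s / Gamma s) has_real_derivative
      ((Jd * Gamma 1 - Ffun 1 * (Gamma 1 * Digamma 1)) / (Gamma 1 * Gamma 1))) (at 1)"
    by (rule DERIV_divide[OF Ffun_deriv[folded Jd_def] has_field_derivative_Gamma[OF nz]]) simp
  then have d: "((\<lambda>s. Ffun s / Gamma s) has_real_derivative (Jd + euler_mascheroni * (pi / 4))) (at 1)"
    using F1 by (simp add: mult.commute)
  have "(L4 has_real_derivative (Jd + euler_mascheroni * (pi / 4))) (at 1)"
    by (rule has_field_derivative_transform_within_open[OF d, of "{0<..}"]) (auto simp: L4_Gamma)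
  then have dd: "deriv L4 1 = Jd + euler_mascheroni * (pi / 4)" by (rule DERIV_imp_deriv)
  show ?thesis unfolding sierpinski_S_def Jd_def[symmetric] L4_1 dd
    by (simp add: field_simps)
qed


lemma ln_abs_bound:
  fixes t :: real assumes t: "t > 0"
  shows "\<bar>ln t\<bar> \<le> t + 4 * t powr (-1/4)"
proof (cases "t \<ge> 1")
  case True
  then have "0 \<le> ln t" by simp
  moreover have "ln t \<le> t - 1" using ln_le_minus_one[OF t] .
  moreover have "0 \<le> t powr (-1/4)" by simp
  moreover have "\<bar>ln t\<bar> = ln t" using \<open>0 \<le> ln t\<close> by simp
  ultimately show ?thesis by linarith
next
  case False
  then have "ln t < 0" using t by simp
  have "- ln t = 4 * ln (t powr (-1/4))" using t by (simp add: ln_powr)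
  also have "\<dots> \<le> 4 * (t powr (-1/4) - 1)" using ln_le_minus_one[of "t powr (-1/4)"] t by simp
  finally show ?thesis using \<open>ln t < 0\<close> t by simp
qed

lemma Jd_integrable: "set_integrable lborel {0<..} (\<lambda>t. ln t * wfun t)"
proof (rule set_integrable_bound)
  have g2: "set_integrable lborel {0<..} (\<lambda>t::real. t powr (2 - 1) * exp (-t))" by (rule Gamma_lborel(1)) simp
  have g3: "set_integrable lborel {0<..} (\<lambda>t::real. t powr (3/4 - 1) * exp (-t))" by (rule Gamma_lborel(1)) simp
  show "set_integrable lborel {0<..} (\<lambda>t::real. t powr (2 - 1) * exp (-t) + 4 * (t powr (3/4 - 1) * exp (-t)))"
    by (rule set_integral_add(1)[OF g2 set_integrable_mult_right[OF g3]])
  show "set_borel_measurable lborel {0<..} (\<lambda>t. ln t * wfun t)"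
    unfolding set_borel_measurable_def wfun_def by measurable
  show "AE x in lborel. x \<in> {0<..} \<longrightarrow> norm (ln (x::real) * wfun x)
      \<le> norm (x powr (2 - 1) * exp (-x) + 4 * (x powr (3/4 - 1) * exp (-x)))"
  proof (rule AE_I2, intro impI)
    fix x :: real assume x: "x \<in> {0<..}"
    then have x0: "x > 0" by simp
    have "\<bar>ln x * wfun x\<bar> = \<bar>ln x\<bar> * wfun x" by (simp add: abs_mult abs_of_pos[OF wfun_pos])
    also have "\<dots> \<le> (x + 4 * x powr (-1/4)) * exp (-x)"
      using ln_abs_bound[OF x0] wfun_le[of x] wfun_pos[of x] by (intro mult_mono) auto
    also have "\<dots> = x powr (2 - 1) * exp (-x) + 4 * (x powr (3/4 - 1) * exp (-x))"
      using x0 by (simp add: algebra_simps)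
    finally show "norm (ln x * wfun x) \<le> norm (x powr (2 - 1) * exp (-x) + 4 * (x powr (3/4 - 1) * exp (-x)))"
      by simp
  qed
qed

lemma wfun_cosh: "wfun t = 1 / (2 * cosh t)"
proof -
  have e2: "exp (-(2*t)) = exp (-t) * exp (-t)" by (simp flip: exp_add)
  have e1: "exp (-t) * exp t = 1" by (simp flip: exp_add)
  have "1 + exp (-(2*t)) = exp (-t) * (exp t + exp (-t))" using e1 e2 by (simp add: algebra_simps)
  then have "wfun t = exp (-t) / (exp (-t) * (exp t + exp (-t)))" by (simp add: wfun_def)
  also have "\<dots> = 1 / (exp t + exp (-t))" by simp
  also have "\<dots> = 1 / (2 * cosh t)"
  proof -
    have "2 * cosh t = exp t + exp (-t)" by (simp add: cosh_def)
    then show ?thesis by simp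
  qed
  finally show ?thesis .
qed


lemma J2_eq_Jd: "J2 = (LBINT t:{0<..}. ln t * wfun t)"
proof -
  define f where "f = (\<lambda>x::real. ln (- ln x) / (1 + x\<^sup>2))"
  define h where "h = (\<lambda>u::real. exp u *\<^sub>R f (exp u))"
  have hm: "h (-t) = ln t * wfun t" for t
  proof -
    have "(exp (-t))^2 = exp (-(2*t))" by (simp add: power2_eq_square flip: exp_add)
    then show ?thesis by (simp add: h_def f_def wfun_def)
  qed
  have "interval_lebesgue_integrable lborel 0 \<infinity> (\<lambda>t. h (-t))"
    unfolding hm interval_lebesgue_integral_0_infty(1) by (rule Jd_integrable)
  then have "interval_lebesgue_integrable lborel (-\<infinity>) (-0) h"
    by (subst (asm) interval_integrable_mirror) simp
  then have mir: "set_integrable lborel {..<0} h"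
    by (simp add: interval_lebesgue_integrable_def zero_ereal_def)
  have A: "((ereal \<circ> exp \<circ> real_of_ereal) \<longlongrightarrow> ereal 0) (at_right (-\<infinity>))"
    unfolding comp_assoc[symmetric] ereal_tendsto_simps by (rule exp_at_bot)
  have B: "((ereal \<circ> exp \<circ> real_of_ereal) \<longlongrightarrow> ereal 1) (at_left (ereal 0))"
    unfolding comp_assoc[symmetric] ereal_tendsto_simps
    by (auto intro!: tendsto_eq_intros)
  have contf: "isCont (\<lambda>x. \<bar>f x\<bar>) (exp u)" "isCont f (exp u)" if "u < 0" for u
    using that unfolding f_def by (auto intro!: continuous_intros simp: add_nonneg_eq_0_iff)
  have absint: "set_integrable lborel (einterval (ereal 0) (ereal 1)) (\<lambda>x. \<bar>f x\<bar>)"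
  proof (rule interval_integral_substitution_nonneg(1)[of "-\<infinity>" "ereal 0" exp exp])
    show "set_integrable lborel (einterval (- \<infinity>) (ereal 0)) (\<lambda>x. \<bar>f (exp x)\<bar> * exp x)"
      using set_integrable_abs[OF mir] by (simp add: h_def abs_mult mult.commute)
  qed (use A B contf in \<open>auto intro!: derivative_eq_intros\<close>)
  have fint: "set_integrable lborel (einterval (ereal 0) (ereal 1)) f"
    using absint by (subst (asm) set_integrable_abs_iff)
      (auto simp: set_borel_measurable_def f_def)
  have "(LBINT x=ereal 0..ereal 1. f x) = (LBINT x=-\<infinity>..ereal 0. exp x *\<^sub>R f (exp x))"
  proof (rule interval_integral_substitution_integrable[of "-\<infinity>" "ereal 0" exp exp])
    show "set_integrable lborel (einterval (- \<infinity>) (ereal 0)) (\<lambda>x. exp x *\<^sub>R f (exp x))"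
      using mir by (simp add: h_def)
  qed (use A B contf fint in \<open>auto intro!: derivative_eq_intros\<close>)
  also have "\<dots> = (LBINT x=-\<infinity>..ereal 0. h x)" by (simp add: h_def)
  also have "\<dots> = (LBINT x=-ereal 0..-(-\<infinity>). h (-x))" by (rule interval_integral_reflect)
  also have "\<dots> = (LBINT x=0..\<infinity>. h (-x))" by (simp add: zero_ereal_def)
  also have "\<dots> = (LBINT t:{0<..}. ln t * wfun t)"
    unfolding interval_lebesgue_integral_0_infty(2) hm ..
  finally show ?thesis
    by (simp add: J2_def f_def interval_lebesgue_integral_def)
qed


lemma G_integrable: "set_integrable lborel {0<..} (\<lambda>t::real. t powr (2 - 1) * exp (-t) + 4 * (t powr (3/4 - 1) * exp (-t)))"
proof -
  have g2: "set_integrable lborel {0<..} (\<lambda>t::real. t powr (2 - 1) * exp (-t))" by (rule Gamma_lborel(1)) simp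
  have g3: "set_integrable lborel {0<..} (\<lambda>t::real. t powr (3/4 - 1) * exp (-t))" by (rule Gamma_lborel(1)) simp
  show ?thesis by (rule set_integral_add(1)[OF g2 set_integrable_mult_right[OF g3]])
qed

lemma ln_le_G:
  fixes u :: real assumes u: "u > 0"
  shows "\<bar>ln u\<bar> \<le> exp u * (u powr (2 - 1) * exp (-u) + 4 * (u powr (3/4 - 1) * exp (-u)))"
proof -
  have "exp u * (u powr (2 - 1) * exp (-u) + 4 * (u powr (3/4 - 1) * exp (-u)))
      = (u + 4 * u powr (-1/4)) * (exp u * exp (-u))" using u by (simp add: algebra_simps)
  also have "exp u * exp (-u) = 1" by (simp flip: exp_add)
  finally show ?thesis using ln_abs_bound[OF u] by simp
qed

lemma pow_ln_integrable:
  fixes b :: real assumes b: "b > 0"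
  shows "set_integrable lborel {0<..<b} (\<lambda>u. u^n * ln u)"
proof (rule set_integrable_bound)
  define G where "G = (\<lambda>t::real. t powr (2 - 1) * exp (-t) + 4 * (t powr (3/4 - 1) * exp (-t)))"
  have "set_integrable lborel {0<..<b} G"
    unfolding G_def by (rule set_integrable_subset[OF G_integrable]) auto
  then show "set_integrable lborel {0<..<b} (\<lambda>u. (b^n * exp b) * G u)"
    by (rule set_integrable_mult_right)
  show "set_borel_measurable lborel {0<..<b} (\<lambda>u. u^n * ln u)"
    unfolding set_borel_measurable_def by measurable
  show "AE x in lborel. x \<in> {0<..<b} \<longrightarrow> norm (x^n * ln x) \<le> norm ((b^n * exp b) * G x)"
  proof (rule AE_I2, intro impI)
    fix x assume x: "x \<in> {0<..<b}"
    then have x0: "x > 0" "x < b" by auto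
    have G0: "G x \<ge> 0" unfolding G_def by simp
    have "\<bar>x^n * ln x\<bar> = x^n * \<bar>ln x\<bar>" using x0 by (simp add: abs_mult)
    also have "\<dots> \<le> b^n * (exp x * G x)"
      using ln_le_G[OF x0(1)] x0 by (intro mult_mono power_mono) (auto simp: G_def)
    also have "\<dots> \<le> b^n * (exp b * G x)"
      using x0 G0 by (intro mult_left_mono mult_right_mono) auto
    finally show "norm (x^n * ln x) \<le> norm ((b^n * exp b) * G x)"
      using G0 b by (simp add: abs_mult mult.assoc)
  qed
qed

lemma x_ln_x_at_0: "((\<lambda>u::real. u * ln u) \<longlongrightarrow> 0) (at_right 0)"
proof -
  have "((\<lambda>x::real. ln x / x) \<longlongrightarrow> 0) at_top" by (rule ln_x_over_x_tendsto_0)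
  then have "((\<lambda>u::real. ln (inverse u) / inverse u) \<longlongrightarrow> 0) (at_right 0)"
    by (rule filterlim_compose) (rule filterlim_inverse_at_top_right)
  then have "((\<lambda>u::real. - (ln (inverse u) / inverse u)) \<longlongrightarrow> -0) (at_right 0)"
    by (rule tendsto_minus)
  moreover have "eventually (\<lambda>u::real. - (ln (inverse u) / inverse u) = u * ln u) (at_right 0)"
  proof (rule eventually_at_rightI[of 0 1])
    fix u :: real assume "u \<in> {0<..<1}"
    then have u: "u > 0" by simp
    have "ln (inverse u) = - ln u" using u by (simp add: ln_inverse)
    then show "- (ln (inverse u) / inverse u) = u * ln u" using u by (simp add: divide_inverse)
  qed simp
  ultimately show ?thesis using tendsto_cong by fastforce
qed

lemma pow_ln_integral:
  fixes b :: real assumes b: "b > 0"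
  shows "(LBINT u:{0<..<b}. u^n * ln u) = b^(n+1) / real (n+1) * (ln b - 1 / real (n+1))"
proof -
  define F where "F = (\<lambda>u::real. u^(n+1) / real (n+1) * (ln u - 1 / real (n+1)))"
  have "(LBINT u=ereal 0..ereal b. u^n * ln u) = F b - 0"
  proof (rule interval_integral_FTC_integrable)
    show "ereal 0 < ereal b" using b by simp
    show "(F has_vector_derivative x^n * ln x) (at x)" if "ereal 0 < ereal x" "ereal x < ereal b" for x
    proof -
      from that have x: "x > 0" by simp
      have "((\<lambda>u. u^(n+1)) has_real_derivative real (n+1) * x^(n+1 - Suc 0)) (at x)" by (rule DERIV_pow)
      then have "((\<lambda>u. u^(n+1) / real (n+1)) has_real_derivative real (n+1) * x^(n+1 - Suc 0) / real (n+1)) (at x)"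
        by (rule DERIV_cdivide)
      then have d1: "((\<lambda>u. u^(n+1) / real (n+1)) has_real_derivative x^n) (at x)"
        by (simp del: of_nat_Suc)
      have d2: "((\<lambda>u. ln u - 1 / real (n+1)) has_real_derivative 1 / x) (at x)"
        using x by (auto intro!: derivative_eq_intros)
      have "(F has_real_derivative x^n * (ln x - 1 / real (n+1)) + 1 / x * (x^(n+1) / real (n+1))) (at x)"
        unfolding F_def by (rule DERIV_mult[OF d1 d2])
      moreover have "1 / x * (x^(n+1) / real (n+1)) = x^n / real (n+1)" using x by simp
      moreover have "x^n * (ln x - 1 / real (n+1)) + x^n / real (n+1) = x^n * ln x"
        by (simp add: algebra_simps)
      ultimately have "(F has_real_derivative x^n * ln x) (at x)" by simp
      then show ?thesis by (simp add: has_real_derivative_iff_has_vector_derivative)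
    qed
    show "isCont (\<lambda>x. x^n * ln x) x" if "ereal 0 < ereal x" "ereal x < ereal b" for x
      using that by (auto intro!: continuous_intros)
    show "set_integrable lborel (einterval (ereal 0) (ereal b)) (\<lambda>x. x^n * ln x)"
      using pow_ln_integrable[OF b] by simp
    show "((F \<circ> real_of_ereal) \<longlongrightarrow> 0) (at_right (ereal 0))"
      unfolding ereal_tendsto_simps
    proof -
      have "((\<lambda>u. u^n * (u * ln u) / real (n+1) - u^(n+1) / real (n+1) / real (n+1)) \<longlongrightarrow>
          0^n * 0 / real (n+1) - 0^(n+1) / real (n+1) / real (n+1)) (at_right 0)"
        by (intro tendsto_intros x_ln_x_at_0) (simp_all del: of_nat_Suc)
      moreover have "F = (\<lambda>u. u^n * (u * ln u) / real (n+1) - u^(n+1) / real (n+1) / real (n+1))"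
        by (rule ext) (simp add: F_def divide_inverse algebra_simps power_Suc2 del: of_nat_Suc)
      ultimately show "(F \<longlongrightarrow> 0) (at_right 0)" by simp
    qed
    show "((F \<circ> real_of_ereal) \<longlongrightarrow> F b) (at_left (ereal b))"
      unfolding ereal_tendsto_simps F_def using b
      by (intro tendsto_intros) auto
  qed
  then show ?thesis
    by (simp add: interval_lebesgue_integral_def F_def b less_imp_le)
qed


lemma cosh_complex_nz:
  fixes z :: complex assumes "norm z < pi/2" shows "cosh z \<noteq> 0"
proof
  assume "cosh z = 0"
  then have "cos (\<i>*z) = 0" by (simp add: cosh_conv_cos)
  then obtain n::int where n: "\<i>*z = complex_of_real (n*pi) + of_real pi/2" by (auto simp: cos_eq_0)
  then have "\<i>*z = complex_of_real (n*pi + pi/2)" by simp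
  then have "norm (\<i>*z) = \<bar>n*pi + pi/2\<bar>" by (metis norm_of_real)
  moreover have "real_of_int n * pi + pi/2 = pi * (real_of_int n + 1/2)" by (simp add: algebra_simps)
  ultimately have e: "norm z = pi * \<bar>real_of_int n + 1/2\<bar>"
    by (simp add: norm_mult abs_mult)
  have "\<bar>real_of_int n + 1/2\<bar> \<ge> 1/2"
  proof (cases "n \<ge> 0")
    case True then show ?thesis by simp
  next
    case False then have "real_of_int n \<le> -1" by simp
    then show ?thesis by simp
  qed
  then have "pi * \<bar>real_of_int n + 1/2\<bar> \<ge> pi * (1/2)" by (intro mult_left_mono) auto
  with e assms show False by linarith
qed

lemma cosh_complex_of_real: "cosh (complex_of_real x) = complex_of_real (cosh x)"
  by (simp add: cosh_def scaleR_conv_of_real exp_of_real flip: of_real_minus)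

lemma sech_series_exists:
  "\<exists>E. \<forall>x::real. \<bar>x\<bar> < pi/2 \<longrightarrow> (\<lambda>k. E k / fact (2*k) * x^(2*k)) sums (1/cosh x)"
proof -
  define f where "f = (\<lambda>z::complex. 1 / cosh z)"
  have hol: "f holomorphic_on ball 0 (pi/2)" unfolding f_def
    by (intro analytic_imp_holomorphic analytic_intros) (auto simp: cosh_complex_nz)
  define a where "a n = Re ((deriv ^^ n) f 0 / fact n)" for n
  have S: "(\<lambda>n. a n * x^n) sums (1/cosh x)" if "\<bar>x\<bar> < pi/2" for x::real
  proof -
    have "of_real x \<in> ball (0::complex) (pi/2)" using that by simp
    from sums_Re[OF holomorphic_power_series[OF hol this]]
    have "(\<lambda>n. Re ((deriv ^^ n) f 0 / fact n * (complex_of_real x - 0) ^ n)) sums Re (f (of_real x))" .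
    moreover have "Re (f (of_real x)) = 1 / cosh x" unfolding f_def
      by (simp add: cosh_complex_of_real)
    moreover have "Re ((deriv ^^ n) f 0 / fact n * (complex_of_real x - 0) ^ n) = a n * x^n" for n
    proof -
      have r: "Re (w * complex_of_real r) = Re w * r" for w r by simp
      show ?thesis unfolding a_def using r[of "(deriv ^^ n) f 0 / fact n" "x^n"]
        by (simp only: diff_zero of_real_power)
    qed
    ultimately show ?thesis by simp
  qed
  define E where "E k = a (2*k) * fact (2*k)" for k
  have "(\<lambda>k. E k / fact (2*k) * x^(2*k)) sums (1/cosh x)" if "\<bar>x\<bar> < pi/2" for x::real
  proof -
    have "(\<lambda>n. (a n * x^n + a n * (-x)^n) / 2) sums ((1/cosh x + 1/cosh (-x))/2)"
      using S[of x] S[of "-x"] that by (intro sums_divide sums_add) auto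
    moreover have "(\<lambda>n. (a n * x^n + a n * (-x)^n) / 2) = (\<lambda>n. if even n then a n * x^n else 0)"
    proof (rule ext)
      fix n show "(a n * x^n + a n * (-x)^n) / 2 = (if even n then a n * x^n else 0)"
        by (cases "even n") simp_all
    qed
    ultimately have 1: "(\<lambda>n. if even n then a n * x^n else 0) sums (1/cosh x)"
      by simp
    have "(\<lambda>k. (\<lambda>n. if even n then a n * x^n else 0) (2*k)) sums (1/cosh x)"
      by (subst sums_mono_reindex) (use 1 in \<open>auto simp: strict_mono_def\<close>)
    then show ?thesis by (simp add: E_def)
  qed
  then show ?thesis by blast
qed

lemma euler_num_sums:
  assumes "\<bar>x\<bar> < pi/2"
  shows "(\<lambda>k. euler_num k / fact (2*k) * x^(2*k)) sums (1 / cosh x)"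
  using someI_ex[OF sech_series_exists] assms unfolding euler_num_def by blast

lemma euler_num_0: "euler_num 0 = 1"
proof -
  have "(\<lambda>k. euler_num k / fact (2*k) * 0^(2*k)) sums (1 / cosh 0)"
    by (rule euler_num_sums) simp
  moreover have "(\<lambda>k. euler_num k / fact (2*k) * (0::real)^(2*k)) = (\<lambda>k. if k = 0 then euler_num 0 else 0)"
    by (rule ext) simp
  ultimately have "(\<lambda>k. if k = 0 then euler_num 0 else 0) sums 1" by simp
  moreover have "(\<lambda>k. if k = 0 then euler_num 0 else 0) sums euler_num 0"
    using sums_single[of 0 "\<lambda>_. euler_num 0"] by simp
  ultimately show ?thesis using sums_unique2 by metis
qed

lemma euler_abs_summable:
  assumes x: "0 \<le> x" "x < pi/2"
  shows "summable (\<lambda>k. \<bar>euler_num k / fact (2*k)\<bar> * x^(2*k))"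
proof -
  define y where "y = (x + pi/2) / 2"
  have y: "x < y" "y < pi/2" using x by (auto simp: y_def)
  have "(\<lambda>k. euler_num k / fact (2*k) * y^(2*k)) sums (1 / cosh y)"
    using y x by (intro euler_num_sums) auto
  then have "summable (\<lambda>k. euler_num k / fact (2*k) * (y^2)^k)"
    by (simp add: sums_summable power_mult)
  moreover have "norm (x^2) < norm (y^2)" using x y by (simp add: power_strict_mono)
  ultimately have "summable (\<lambda>k. norm (euler_num k / fact (2*k) * (x^2)^k))"
    by (rule powser_insidea)
  then show ?thesis by (simp add: abs_mult power_mult)
qed


lemma main_series:
  fixes b :: real
  assumes b: "0 < b" "b < pi/2"
  shows "(\<lambda>k. euler_num k / fact (2*k) * (b^(2*k+1) / real (2*k+1) * (ln b - 1 / real (2*k+1))))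
           sums (LBINT u:{0<..<b}. ln u / cosh u)"
proof -
  define c where "c k = euler_num k / fact (2*k)" for k
  define f where "f = (\<lambda>k (u::real). indicator {0<..<b} u *\<^sub>R (c k * (u^(2*k) * ln u)))"
  define K where "K = (LBINT u:{0<..<b}. \<bar>ln u\<bar>)"
  have lnint: "set_integrable lborel {0<..<b} (\<lambda>u. \<bar>ln u\<bar>)"
    using set_integrable_abs[OF pow_ln_integrable[OF b(1), of 0]] by simp
  have fint: "integrable lborel (f k)" for k
    using set_integrable_mult_right[OF pow_ln_integrable[OF b(1), of "2*k"], of "c k"]
    unfolding f_def set_integrable_def by simp
  have fnorm: "norm (f k u) \<le> indicator {0<..<b} u *\<^sub>R (\<bar>c k\<bar> * b^(2*k) * \<bar>ln u\<bar>)" for k u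
  proof (cases "u \<in> {0<..<b}")
    case True
    then have "u^(2*k) \<le> b^(2*k)" by (intro power_mono) auto
    then have "\<bar>c k\<bar> * (u^(2*k) * \<bar>ln u\<bar>) \<le> \<bar>c k\<bar> * (b^(2*k) * \<bar>ln u\<bar>)"
      by (intro mult_left_mono mult_right_mono) auto
    then show ?thesis using True by (simp add: f_def abs_mult mult.assoc)
  qed (simp add: f_def)
  have intnorm: "(\<integral>u. norm (f k u) \<partial>lborel) \<le> \<bar>c k\<bar> * b^(2*k) * K" for k
  proof -
    have "(\<integral>u. norm (f k u) \<partial>lborel) \<le> (\<integral>u. indicator {0<..<b} u *\<^sub>R (\<bar>c k\<bar> * b^(2*k) * \<bar>ln u\<bar>) \<partial>lborel)"
    proof (rule integral_mono)
      show "integrable lborel (\<lambda>u. norm (f k u))" using fint by simp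
      show "integrable lborel (\<lambda>u. indicator {0<..<b} u *\<^sub>R (\<bar>c k\<bar> * b^(2*k) * \<bar>ln u\<bar>))"
        using set_integrable_mult_right[OF lnint, of "\<bar>c k\<bar> * b^(2*k)"] unfolding set_integrable_def by simp
    qed (rule fnorm)
    also have "(\<lambda>u. indicator {0<..<b} u *\<^sub>R (\<bar>c k\<bar> * b^(2*k) * \<bar>ln u\<bar>))
        = (\<lambda>u. (\<bar>c k\<bar> * b^(2*k)) * (indicator {0<..<b} u *\<^sub>R \<bar>ln u\<bar>))"
      by (rule ext) simp
    also have "(\<integral>u. (\<bar>c k\<bar> * b^(2*k)) * (indicator {0<..<b} u *\<^sub>R \<bar>ln u\<bar>) \<partial>lborel) = \<bar>c k\<bar> * b^(2*k) * K"
      unfolding K_def set_lebesgue_integral_def by (rule integral_mult_right_zero)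
    finally show ?thesis .
  qed
  have summ_abs: "summable (\<lambda>k. \<bar>c k\<bar> * b^(2*k))"
    using euler_abs_summable[of b] b unfolding c_def by simp
  have sum1: "AE u in lborel. summable (\<lambda>k. norm (f k u))"
  proof (rule AE_I2)
    fix u :: real
    show "summable (\<lambda>k. norm (f k u))"
    proof (cases "u \<in> {0<..<b}")
      case True
      then have "summable (\<lambda>k. \<bar>c k\<bar> * u^(2*k))"
        using euler_abs_summable[of u] b unfolding c_def by simp
      then have "summable (\<lambda>k. \<bar>c k\<bar> * u^(2*k) * \<bar>ln u\<bar>)" by (rule summable_mult2)
      then show ?thesis using True by (simp add: f_def abs_mult mult.assoc)
    qed (simp add: f_def)
  qed
  have sum2: "summable (\<lambda>k. \<integral>u. norm (f k u) \<partial>lborel)"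
  proof (rule summable_comparison_test)
    show "\<exists>N. \<forall>n\<ge>N. norm (\<integral>u. norm (f n u) \<partial>lborel) \<le> \<bar>c n\<bar> * b^(2*n) * K"
      using intnorm by (intro exI[of _ 0]) (simp add: integral_nonneg_AE)
    show "summable (\<lambda>n. \<bar>c n\<bar> * b^(2*n) * K)" using summ_abs by (rule summable_mult2)
  qed
  have S: "(\<lambda>k. integral\<^sup>L lborel (f k)) sums (\<integral>u. (\<Sum>k. f k u) \<partial>lborel)"
    by (rule sums_integral[OF fint sum1 sum2])
  have If: "integral\<^sup>L lborel (f k) = c k * (b^(2*k+1) / real (2*k+1) * (ln b - 1 / real (2*k+1)))" for k
  proof -
    have "integral\<^sup>L lborel (f k) = c k * (LBINT u:{0<..<b}. u^(2*k) * ln u)"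
      unfolding f_def set_lebesgue_integral_def by (simp add: mult.left_commute)
    also have "\<dots> = c k * (b^(2*k+1) / real (2*k+1) * (ln b - 1 / real (2*k+1)))"
      using pow_ln_integral[OF b(1), of "2*k"] by simp
    finally show ?thesis .
  qed
  have Sf: "(\<Sum>k. f k u) = indicator {0<..<b} u *\<^sub>R (ln u / cosh u)" for u
  proof (cases "u \<in> {0<..<b}")
    case True
    then have "\<bar>u\<bar> < pi/2" using b by auto
    from euler_num_sums[OF this] have "(\<lambda>k. c k * u^(2*k)) sums (1 / cosh u)" unfolding c_def .
    then have "(\<lambda>k. c k * u^(2*k) * ln u) sums (1 / cosh u * ln u)" by (rule sums_mult2)
    then have "(\<Sum>k. c k * u^(2*k) * ln u) = ln u / cosh u" by (simp add: sums_iff)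
    then show ?thesis using True by (simp add: f_def mult.assoc)
  qed (simp add: f_def)
  from S show ?thesis
    unfolding If Sf set_lebesgue_integral_def c_def .
qed


lemma term_eq:
  "euler_num (Suc k) / fact (2 * Suc k) * (b^(2 * Suc k + 1) / real (2 * Suc k + 1) * (ln b - 1 / real (2 * Suc k + 1)))
   = euler_num (Suc k) * b ^ (2 * Suc k + 1) / fact (2 * Suc k + 1) * (ln b - 1 / real (2 * Suc k + 1))"
proof -
  have f: "fact (2 * Suc k + 1) = real (2 * Suc k + 1) * (fact (2 * Suc k) :: real)"
    using fact_Suc[of "2 * Suc k", where 'a=real] by (simp del: fact_Suc)
  have "fact (2 * Suc k) \<noteq> (0::real)" by simp
  moreover have "real (2 * Suc k + 1) \<noteq> 0" by simp
  ultimately show ?thesis unfolding f by (simp add: field_simps)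
qed

lemma cosh_wfun: "ln u / cosh u = 2 * (ln u * wfun u)"
  by (simp add: wfun_cosh)

lemma aux2: "(J::real) = 1/2 * L \<Longrightarrow> L = M + T \<Longrightarrow> M = a0 + S \<Longrightarrow> a0 = b * (lb - 1)
   \<Longrightarrow> J = 1/2 * S + b / 2 * (lb - 1) + 1/2 * T"
  by (simp add: field_simps)

lemma part2:
  fixes b :: real
  assumes b: "0 < b" "b < pi / 2"
  shows "J2 = 1/2 * (\<Sum>k. euler_num (Suc k) * b ^ (2 * Suc k + 1) / fact (2 * Suc k + 1)
                       * (ln b - 1 / real (2 * Suc k + 1)))
              + b / 2 * (ln b - 1)
              + 1/2 * (LBINT u:{b..}. ln u / cosh u)"
proof -
  have Hint: "set_integrable lborel {0<..} (\<lambda>u::real. ln u / cosh u)"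
  proof -
    have e: "(\<lambda>u::real. ln u / cosh u) = (\<lambda>u. 2 * (ln u * wfun u))" by (rule ext) (rule cosh_wfun)
    show ?thesis unfolding e by (rule set_integrable_mult_right) (rule Jd_integrable)
  qed
  have J2H: "J2 = 1/2 * (LBINT u:{0<..}. ln u / cosh u)"
  proof -
    have "J2 = (LBINT u:{0<..}. (1/2) * (ln u / cosh u))"
      unfolding J2_eq_Jd cosh_wfun by simp
    also have "\<dots> = 1/2 * (LBINT u:{0<..}. ln u / cosh u)"
      by (rule set_integral_mult_right)
    finally show ?thesis .
  qed
  have U: "{0<..} = {0<..<b} \<union> {b..}" using b by auto
  have L: "(LBINT u:{0<..}. ln u / cosh u) = (LBINT u:{0<..<b}. ln u / cosh u) + (LBINT u:{b..}. ln u / cosh u)"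
    unfolding U
    by (rule set_integral_Un) (use b Hint in \<open>auto intro: set_integrable_subset\<close>)
  define a where "a k = euler_num k / fact (2*k) * (b^(2*k+1) / real (2*k+1) * (ln b - 1 / real (2*k+1)))" for k
  have sa: "a sums (LBINT u:{0<..<b}. ln u / cosh u)"
    unfolding a_def by (rule main_series[OF b])
  then have M: "(LBINT u:{0<..<b}. ln u / cosh u) = a 0 + (\<Sum>k. a (Suc k))"
    using suminf_split_head[OF sums_summable[OF sa]] sums_unique[OF sa] by simp
  have a0: "a 0 = b * (ln b - 1)" by (simp add: a_def euler_num_0)
  have "(\<lambda>k. a (Suc k)) = (\<lambda>k. euler_num (Suc k) * b ^ (2 * Suc k + 1) / fact (2 * Suc k + 1)
                       * (ln b - 1 / real (2 * Suc k + 1)))"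
    by (rule ext) (simp only: a_def term_eq)
  then have Seq: "(\<Sum>k. a (Suc k)) = (\<Sum>k. euler_num (Suc k) * b ^ (2 * Suc k + 1) / fact (2 * Suc k + 1)
                       * (ln b - 1 / real (2 * Suc k + 1)))" by simp
  show ?thesis by (rule aux2[OF J2H L M[unfolded Seq] a0])
qed

lemma part2_summable:
  fixes b :: real
  assumes b: "0 < b" "b < pi / 2"
  shows "summable (\<lambda>k. euler_num (Suc k) * b ^ (2 * Suc k + 1) / fact (2 * Suc k + 1)
                       * (ln b - 1 / real (2 * Suc k + 1)))"
proof -
  define a where "a k = euler_num k / fact (2*k) * (b^(2*k+1) / real (2*k+1) * (ln b - 1 / real (2*k+1)))" for k
  have sa: "summable a"
    unfolding a_def by (rule sums_summable[OF main_series[OF b]])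
  then have "summable (\<lambda>k. a (Suc k))" by (simp add: summable_Suc_iff)
  moreover have "(\<lambda>k. a (Suc k)) = (\<lambda>k. euler_num (Suc k) * b ^ (2 * Suc k + 1) / fact (2 * Suc k + 1)
                       * (ln b - 1 / real (2 * Suc k + 1)))"
    by (rule ext) (simp only: a_def term_eq)
  ultimately show ?thesis by simp
qed

lemma aux_lin: "(J::real) = 1/2 * (- S) + 1/2 * (0 - 1) + 1/2 * T \<Longrightarrow> J = - 1/2 * (1 + S) + 1/2 * T"
  by (simp add: field_simps)

theorem proposition9:
  shows "sierpinski_S = 2 * euler_mascheroni + 4 / pi * J2
    \<and> (\<forall>b::real. 0 < b \<and> b < pi / 2 \<longrightarrow>
         J2 = 1/2 * (\<Sum>k. euler_num (Suc k) * b ^ (2 * Suc k + 1) / fact (2 * Suc k + 1)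
                       * (ln b - 1 / real (2 * Suc k + 1)))
              + b / 2 * (ln b - 1)
              + 1/2 * (LBINT u:{b..}. ln u / cosh u))
    \<and> J2 = - 1/2 * (1 + (\<Sum>k. euler_num (Suc k) / fact (2 * Suc k + 1) / real (2 * Suc k + 1)))
           + 1/2 * (LBINT u:{1..}. ln u / cosh u)"
proof (intro conjI allI impI)
  show "sierpinski_S = 2 * euler_mascheroni + 4 / pi * J2"
    using sierpinski_S_eq J2_eq_Jd by simp
next
  fix b :: real assume "0 < b \<and> b < pi / 2"
  then show "J2 = 1/2 * (\<Sum>k. euler_num (Suc k) * b ^ (2 * Suc k + 1) / fact (2 * Suc k + 1)
                       * (ln b - 1 / real (2 * Suc k + 1)))
              + b / 2 * (ln b - 1)
              + 1/2 * (LBINT u:{b..}. ln u / cosh u)"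
    using part2 by blast
next
  have b1: "(0::real) < 1" "1 < pi / 2" using pi_gt3 by auto
  have eq: "(\<lambda>k. euler_num (Suc k) * 1 ^ (2 * Suc k + 1) / fact (2 * Suc k + 1) * (ln 1 - 1 / real (2 * Suc k + 1)))
      = (\<lambda>k. - (euler_num (Suc k) / fact (2 * Suc k + 1) / real (2 * Suc k + 1)))"
    by (rule ext) simp
  have sm: "summable (\<lambda>k. - (euler_num (Suc k) / fact (2 * Suc k + 1) / real (2 * Suc k + 1)))"
    using part2_summable[OF b1] unfolding eq .
  then have sm': "summable (\<lambda>k. euler_num (Suc k) / fact (2 * Suc k + 1) / real (2 * Suc k + 1))"
    by (simp only: summable_minus_iff)
  show "J2 = - 1/2 * (1 + (\<Sum>k. euler_num (Suc k) / fact (2 * Suc k + 1) / real (2 * Suc k + 1)))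
           + 1/2 * (LBINT u:{1..}. ln u / cosh u)"
  proof -
    have "J2 = 1/2 * (\<Sum>k. - (euler_num (Suc k) / fact (2 * Suc k + 1) / real (2 * Suc k + 1)))
              + 1 / 2 * (ln 1 - 1) + 1/2 * (LBINT u:{1..}. ln u / cosh u)"
      using part2[OF b1] unfolding eq by simp
    then show ?thesis unfolding suminf_minus[OF sm'] ln_one by (rule aux_lin)
  qed
qed

end
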